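(* Let $n\ge1$ and let $\mathbf 1=(1,1,\dots,1)$ ($n$ entries). Then (i) the map $w\mapsto\varphi_r((w,\mathbf 1))$ is a bijection from $M_{rb}(n)$ onto the set $NC_n$ of noncrossing partitions of $[n]$; (ii) the map $w\mapsto\varphi_l((w,\mathbf 1))$ is a bijection from $M_{rb}(n)$ onto the set $NN_n$ of nonnesting partitions of $[n]$.
   Context: A Motzkin path of length $n$ is a sequence of points $s_0=(0,0),s_1,\dots,s_n=(n,0)$, $s_i=(i,y_i)$, $y_i\ge0$, each step $(s_{i-1},s_i)$ East, North-East or South-East ($y_i-y_{i-1}=0,1,-1$); step $(s_{i-1},s_i)$ has index $i$ and height $y_{i-1}$. A restricted bicolored Motzkin path is a Motzkin path whose East steps are colored red or blue, every blue East step having height $>0$; $M_{rb}(n)$ is the set of these of length $n$. A Charlier diagram of length $n$ is a pair $(w,\xi)$, $w\in M_{rb}(n)$, $\xi=(\xi_1,\dots,\xi_n)$ integers with $\xi_i=1$ if step $i$ is North-East or red East, and $1\le\xi_i\le k$ if step $i$ is South-East or blue East of height $k$. $\varphi_l(w,\xi)$ is the partition of $[n]$ obtained thus: maintain a set $V$ (initially empty) and edge set $E$; for $i=1,\dots,n$: if step $i$ is North-East add $i$ to $V$; if red East do nothing; if South-East or blue East, let $x$ be the $\xi_i$-th smallest element of $V$, add edge $(x,i)$, remove $x$ from $V$, and if blue East add $i$ to $V$; the blocks are the connected components of $([n],E)$. $\varphi_r$ is the same with "$\xi_i$-th largest". For a partition of $[n]$ (set of disjoint nonempty blocks covering $[n]$),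 edges are pairs $(i,j)$, $i<j$, of consecutive elements of a block; two edges $(i_1,j_1),(i_2,j_2)$ cross if $i_1<i_2<j_1<j_2$ and nest if $i_1<i_2<j_2<j_1$. A partition is noncrossing (resp. nonnesting) if no two of its edges cross (resp. nest). *)

theory Defs
  imports Main "HOL-Library.Disjoint_Sets"
begin

text \<open>Steps: North-East, South-East, red East, blue East.\<close>
datatype step = NE | SE | ER | EB

fun delta :: "step \<Rightarrow> int" where
  "delta NE = 1" | "delta SE = -1" | "delta ER = 0" | "delta EB = 0"

text \<open>Height reached after a sequence of steps (starting at height 0).
  The height of step i (1-based) is ht (take (i-1) w).\<close>
definition ht :: "step list \<Rightarrow> int" where
  "ht w = sum_list (map delta w)"

definition motzkin :: "step list \<Rightarrow> bool" where
  "motzkin w \<longleftrightarrow> (\<forall>k \<le> length w. ht (take k w) \<ge> 0) \<and> ht w = 0"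

definition Mrb :: "nat \<Rightarrow> step list set" where
  "Mrb n = {w. length w = n \<and> motzkin w \<and>
                (\<forall>i < length w. w ! i = EB \<longrightarrow> ht (take i w) > 0)}"

text \<open>Charlier diagrams (w, xi); xi is a list, xi ! (i-1) = xi_i.\<close>
definition charlier :: "nat \<Rightarrow> step list \<Rightarrow> nat list \<Rightarrow> bool" where
  "charlier n w xi \<longleftrightarrow> w \<in> Mrb n \<and> length xi = n \<and>
     (\<forall>i < n. (w ! i \<in> {NE, ER} \<longrightarrow> xi ! i = 1) \<and>
              (w ! i \<in> {SE, EB} \<longrightarrow> 1 \<le> xi ! i \<and> int (xi ! i) \<le> ht (take i w)))"

definition kth_smallest :: "nat set \<Rightarrow> nat \<Rightarrow> nat" where
  "kth_smallest V k = sorted_list_of_set V ! (k - 1)"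

definition kth_largest :: "nat set \<Rightarrow> nat \<Rightarrow> nat" where
  "kth_largest V k = rev (sorted_list_of_set V) ! (k - 1)"

fun phi_step :: "(nat set \<Rightarrow> nat \<Rightarrow> nat) \<Rightarrow> nat set \<times> (nat \<times> nat) set
                  \<Rightarrow> nat \<times> step \<times> nat \<Rightarrow> nat set \<times> (nat \<times> nat) set" where
  "phi_step sel (V, E) (i, s, k) =
     (case s of
        NE \<Rightarrow> (insert i V, E)
      | ER \<Rightarrow> (V, E)
      | SE \<Rightarrow> (V - {sel V k}, insert (sel V k, i) E)
      | EB \<Rightarrow> (insert i (V - {sel V k}), insert (sel V k, i) E))"

definition phi_edges :: "(nat set \<Rightarrow> nat \<Rightarrow> nat) \<Rightarrow> step list \<Rightarrow> nat list \<Rightarrow> (nat \<times> nat) set" where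
  "phi_edges sel w xi =
     snd (foldl (phi_step sel) ({}, {}) (zip [1..<length w + 1] (zip w xi)))"

definition components :: "nat \<Rightarrow> (nat \<times> nat) set \<Rightarrow> nat set set" where
  "components n E = {1..n} // ((E \<union> E\<inverse>) \<inter> ({1..n} \<times> {1..n}))\<^sup>*"

definition phi_l :: "step list \<Rightarrow> nat list \<Rightarrow> nat set set" where
  "phi_l w xi = components (length w) (phi_edges kth_smallest w xi)"

definition phi_r :: "step list \<Rightarrow> nat list \<Rightarrow> nat set set" where
  "phi_r w xi = components (length w) (phi_edges kth_largest w xi)"

definition part_edges :: "nat set set \<Rightarrow> (nat \<times> nat) set" where
  "part_edges P = {(i, j). \<exists>B\<in>P. i \<in> B \<and> j \<in> B \<and> i < j \<and> (\<forall>k\<in>B. \<not> (i < k \<and> k < j))}"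

definition noncrossing :: "nat set set \<Rightarrow> bool" where
  "noncrossing P \<longleftrightarrow> \<not> (\<exists>i1 j1 i2 j2. (i1, j1) \<in> part_edges P \<and> (i2, j2) \<in> part_edges P \<and>
                          i1 < i2 \<and> i2 < j1 \<and> j1 < j2)"

definition nonnesting :: "nat set set \<Rightarrow> bool" where
  "nonnesting P \<longleftrightarrow> \<not> (\<exists>i1 j1 i2 j2. (i1, j1) \<in> part_edges P \<and> (i2, j2) \<in> part_edges P \<and>
                          i1 < i2 \<and> i2 < j2 \<and> j2 < j1)"

definition NC :: "nat \<Rightarrow> nat set set set" where
  "NC n = {P. partition_on {1..n} P \<and> noncrossing P}"

definition NN :: "nat \<Rightarrow> nat set set set" where
  "NN n = {P. partition_on {1..n} P \<and> nonnesting P}"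

end

theory Submission
  imports Defs
begin


definition st :: "(nat set \<Rightarrow> nat \<Rightarrow> nat) \<Rightarrow> step list \<Rightarrow> nat \<Rightarrow> nat set \<times> (nat \<times> nat) set" where
  "st sel w t = foldl (phi_step sel) ({}, {}) (zip [1..<t+1] (zip (take t w) (replicate t 1)))"

lemma st_0[simp]: "st sel w 0 = ({}, {})"
  by (simp add: st_def)

lemma st_Suc: assumes "t < length w"
  shows "st sel w (Suc t) = phi_step sel (st sel w t) (Suc t, w!t, 1)"
proof -
  have "zip [1..<Suc t+1] (zip (take (Suc t) w) (replicate (Suc t) (1::nat)))
      = zip [1..<t+1] (zip (take t w) (replicate t 1)) @ [(Suc t, w!t, 1)]"
  proof -
    have a: "[1..<Suc t+1] = [1..<t+1] @ [Suc t]" by simp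
    have b: "replicate (Suc t) (1::nat) = replicate t 1 @ [1]" by (simp add: replicate_append_same)
    have c: "take (Suc t) w = take t w @ [w!t]" using assms by (simp add: take_Suc_conv_app_nth)
    have l1: "length (take t w) = length (replicate t (1::nat))" using assms by simp
    have l2: "length [1..<t+1] = length (zip (take t w) (replicate t (1::nat)))" using assms by simp
    show ?thesis by (simp only: a b c zip_append[OF l1] zip_append[OF l2]) simp
  qed
  then show ?thesis by (simp add: st_def)
qed

lemma st_Suc_split: assumes "t < length w"
  shows "fst (st sel w (Suc t)) = (let V = fst (st sel w t) in case w!t of NE \<Rightarrow> insert (Suc t) V | ER \<Rightarrow> V
            | SE \<Rightarrow> V - {sel V 1} | EB \<Rightarrow> insert (Suc t) (V - {sel V 1}))"
    "snd (st sel w (Suc t)) = (let V = fst (st sel w t); E = snd (st sel w t) in case w!t of NE \<Rightarrow> E | ER \<Rightarrow> E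
            | SE \<Rightarrow> insert (sel V 1, Suc t) E | EB \<Rightarrow> insert (sel V 1, Suc t) E)"
  using st_Suc[OF assms, of sel] by (cases "st sel w t"; cases "w!t"; simp)+

lemma phi_edges_st: "length w = n \<Longrightarrow> phi_edges sel w (replicate n 1) = snd (st sel w n)"
  by (simp add: phi_edges_def st_def)

lemma ht_Suc: "t < length w \<Longrightarrow> ht (take (Suc t) w) = ht (take t w) + delta (w!t)"
  by (simp add: ht_def take_Suc_conv_app_nth)

definition Os :: "step list \<Rightarrow> nat \<Rightarrow> nat set" where
  "Os w t = {x\<in>{1..t}. w!(x-1) \<in> {NE,EB}}"
definition Is :: "step list \<Rightarrow> nat \<Rightarrow> nat set" where
  "Is w t = {x\<in>{1..t}. w!(x-1) \<in> {SE,EB}}"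

lemma Os_Suc: "Os w (Suc t) = (if w!t \<in> {NE,EB} then insert (Suc t) (Os w t) else Os w t)"
  by (auto simp: Os_def le_Suc_eq)
lemma Is_Suc: "Is w (Suc t) = (if w!t \<in> {SE,EB} then insert (Suc t) (Is w t) else Is w t)"
  by (auto simp: Is_def le_Suc_eq)
lemma Os_sub: "Os w t \<subseteq> {1..t}" by (auto simp: Os_def)
lemma Is_sub: "Is w t \<subseteq> {1..t}" by (auto simp: Is_def)

definition ginv :: "step list \<Rightarrow> nat set \<Rightarrow> (nat \<times> nat) set \<Rightarrow> nat \<Rightarrow> bool" where
  "ginv w V E t \<longleftrightarrow> finite V \<and> V \<subseteq> Os w t \<and> int (card V) = ht (take t w) \<and>
     E \<subseteq> {(x,y). 1 \<le> x \<and> x < y \<and> y \<le> t} \<and> Domain E = Os w t - V \<and> Range E = Is w t \<and>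
     (\<forall>x y y'. (x,y)\<in>E \<longrightarrow> (x,y')\<in>E \<longrightarrow> y = y') \<and>
     (\<forall>x x' y. (x,y)\<in>E \<longrightarrow> (x',y)\<in>E \<longrightarrow> x = x')"

lemma ginv_0: "ginv w {} {} 0"
  by (simp add: ginv_def Os_def Is_def ht_def)

lemma ginv_step:
  assumes g: "ginv w V E t" and t: "t < length w" and ne: "w!t \<in> {SE,EB} \<Longrightarrow> V \<noteq> {}"
    and selok: "\<And>V. finite V \<Longrightarrow> V \<noteq> {} \<Longrightarrow> sel V 1 \<in> V"
  shows "ginv w (case w!t of NE \<Rightarrow> insert (Suc t) V | ER \<Rightarrow> V
            | SE \<Rightarrow> V - {sel V 1} | EB \<Rightarrow> insert (Suc t) (V - {sel V 1}))
          (case w!t of NE \<Rightarrow> E | ER \<Rightarrow> E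
            | SE \<Rightarrow> insert (sel V 1, Suc t) E | EB \<Rightarrow> insert (sel V 1, Suc t) E) (Suc t)"
proof -
  have fin: "finite V" and VO: "V \<subseteq> Os w t" and cV: "int (card V) = ht (take t w)"
    and Es: "E \<subseteq> {(x,y). 1 \<le> x \<and> x < y \<and> y \<le> t}" and D: "Domain E = Os w t - V"
    and R: "Range E = Is w t" and fn: "\<forall>x y y'. (x,y)\<in>E \<longrightarrow> (x,y')\<in>E \<longrightarrow> y = y'"
    and inj: "\<forall>x x' y. (x,y)\<in>E \<longrightarrow> (x',y)\<in>E \<longrightarrow> x = x'"
    using g by (auto simp: ginv_def)
  have hS: "ht (take (Suc t) w) = ht (take t w) + delta (w!t)" using ht_Suc[OF t] .
  have nV: "Suc t \<notin> V" using VO Os_sub by fastforce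
  have nO: "Suc t \<notin> Os w t" using Os_sub by fastforce
  have nR: "(x, Suc t) \<notin> E" for x using Es by auto
  show ?thesis
  proof (cases "w!t")
    case NE
    then show ?thesis using fin VO cV Es D R fn inj hS nV nO
      by (auto simp: ginv_def Os_Suc Is_Suc)
  next
    case ER
    then show ?thesis using fin VO cV Es D R fn inj hS nV nO
      by (auto simp: ginv_def Os_Suc Is_Suc)
  next
    case SE
    then have pV: "sel V 1 \<in> V" using ne selok fin by auto
    then have pD: "sel V 1 \<notin> Domain E" using D by auto
    have p1: "1 \<le> sel V 1" "sel V 1 \<le> t" using pV VO Os_sub by fastforce+
    have cpos: "card V \<ge> 1" using pV fin by (metis One_nat_def Suc_leI card_gt_0_iff empty_iff)
    have cc: "int (card (V - {sel V 1})) = int (card V) - 1" using pV fin cpos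
      by (simp add: card_Diff_singleton of_nat_diff)
    show ?thesis using SE fin VO cV Es D R fn inj hS nV nO pV pD p1 cc nR
      by (auto simp: ginv_def Os_Suc Is_Suc)
  next
    case EB
    then have pV: "sel V 1 \<in> V" using ne selok fin by auto
    then have pD: "sel V 1 \<notin> Domain E" using D by auto
    have p1: "1 \<le> sel V 1" "sel V 1 \<le> t" using pV VO Os_sub by fastforce+
    have cpos: "card V \<ge> 1" using pV fin by (metis One_nat_def Suc_leI card_gt_0_iff empty_iff)
    have cc: "int (card (insert (Suc t) (V - {sel V 1}))) = int (card V)" using pV fin nV cpos
      by (simp add: card_Diff_singleton of_nat_diff card_gt_0_iff Suc_le_eq)
    show ?thesis using EB fin VO cV Es D R fn inj hS nV nO pV pD p1 cc nR
      by (auto simp: ginv_def Os_Suc Is_Suc)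
  qed
qed



definition chain_graph :: "nat \<Rightarrow> (nat \<times> nat) set \<Rightarrow> bool" where
  "chain_graph n E \<longleftrightarrow> E \<subseteq> {(x,y). 1 \<le> x \<and> x < y \<and> y \<le> n} \<and>
     (\<forall>x y y'. (x,y)\<in>E \<longrightarrow> (x,y')\<in>E \<longrightarrow> y = y') \<and>
     (\<forall>x x' y. (x,y)\<in>E \<longrightarrow> (x',y)\<in>E \<longrightarrow> x = x')"

lemma cg_mono: assumes "chain_graph n E" "(a,b) \<in> E\<^sup>*" shows "a \<le> b"
  using assms(2)
proof (induction rule: rtrancl_induct)
  case base then show ?case by simp
next
  case (step y z)
  have "(y,z) \<in> {(x,y). 1 \<le> x \<and> x < y \<and> y \<le> n}" using step(2) assms(1) unfolding chain_graph_def by blast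
  then have "y < z" by simp
  then show ?case using step.IH by simp
qed

lemma cg_conn: assumes cg: "chain_graph n E" and "(x,k) \<in> (E \<union> E\<inverse>)\<^sup>*"
  shows "(x,k) \<in> E\<^sup>* \<or> (k,x) \<in> E\<^sup>*"
  using assms(2)
proof (induction rule: rtrancl_induct)
  case base then show ?case by simp
next
  case (step k k')
  have fn: "\<And>x y y'. (x,y)\<in>E \<Longrightarrow> (x,y')\<in>E \<Longrightarrow> y = y'"
    and inj: "\<And>x x' y. (x,y)\<in>E \<Longrightarrow> (x',y)\<in>E \<Longrightarrow> x = x'" using cg unfolding chain_graph_def by blast+
  from step.hyps(2) have "(k,k') \<in> E \<or> (k',k) \<in> E" by auto
  then show ?case
  proof
    assume e: "(k,k') \<in> E"
    from step.IH show ?thesis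
    proof
      assume "(x,k) \<in> E\<^sup>*" then show ?thesis using e by auto
    next
      assume a: "(k,x) \<in> E\<^sup>*"
      show ?thesis
      proof (cases "k = x")
        case True then show ?thesis using e by auto
      next
        case False
        then obtain m where "(k,m) \<in> E" "(m,x) \<in> E\<^sup>*" using a by (auto elim: converse_rtranclE)
        then show ?thesis using fn[OF e] by auto
      qed
    qed
  next
    assume e: "(k',k) \<in> E"
    from step.IH show ?thesis
    proof
      assume a: "(x,k) \<in> E\<^sup>*"
      show ?thesis
      proof (cases "k = x")
        case True then show ?thesis using e by auto
      next
        case False
        then obtain m where "(m,k) \<in> E" "(x,m) \<in> E\<^sup>*" using a by (auto elim: rtranclE)
        then show ?thesis using inj[OF e] by auto
      qed
    next
      assume "(k,x) \<in> E\<^sup>*" then show ?thesis using e by (auto intro: converse_rtrancl_into_rtrancl)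
    qed
  qed
qed

lemma equiv_R: "equiv UNIV ((E \<union> E\<inverse>)\<^sup>*)"
  by (simp add: equiv_def refl_rtrancl sym_rtrancl sym_Un_converse trans_rtrancl)

lemma cg_components_eq: assumes "chain_graph n E"
  shows "components n E = {1..n} // ((E \<union> E\<inverse>)\<^sup>*)"
proof -
  have "(E \<union> E\<inverse>) \<inter> ({1..n} \<times> {1..n}) = E \<union> E\<inverse>" using assms unfolding chain_graph_def by auto
  then show ?thesis by (simp add: components_def)
qed

lemma cg_class_sub: assumes cg: "chain_graph n E" and "x \<in> {1..n}"
  shows "((E \<union> E\<inverse>)\<^sup>*) `` {x} \<subseteq> {1..n}"
proof
  fix k assume "k \<in> ((E \<union> E\<inverse>)\<^sup>*) `` {x}"
  then have "(x,k) \<in> E\<^sup>* \<or> (k,x) \<in> E\<^sup>*" using cg_conn[OF cg] by auto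
  then show "k \<in> {1..n}"
  proof
    assume a: "(x,k) \<in> E\<^sup>*"
    show ?thesis
    proof (cases "x = k")
      case True then show ?thesis using assms by simp
    next
      case False then obtain m where "(m,k)\<in>E" using a by (auto elim: rtranclE)
      then show ?thesis using cg unfolding chain_graph_def by auto
    qed
  next
    assume a: "(k,x) \<in> E\<^sup>*"
    show ?thesis
    proof (cases "x = k")
      case True then show ?thesis using assms by simp
    next
      case False then obtain m where "(k,m)\<in>E" using a by (auto elim: converse_rtranclE)
      then show ?thesis using cg unfolding chain_graph_def by auto
    qed
  qed
qed

lemma cg_partition: assumes cg: "chain_graph n E"
  shows "partition_on {1..n} (components n E)"
proof -
  let ?R = "(E \<union> E\<inverse>)\<^sup>*"
  have eq: "equiv UNIV ?R" by (rule equiv_R)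
  show ?thesis unfolding cg_components_eq[OF cg]
  proof (rule partition_onI)
    have "\<Union> ({1..n} // ?R) \<subseteq> {1..n}" using cg_class_sub[OF cg] unfolding quotient_def by blast
    moreover have "{1..n} \<subseteq> \<Union> ({1..n} // ?R)" unfolding quotient_def by blast
    ultimately show "\<Union> ({1..n} // ?R) = {1..n}" by blast
  next
    fix p q assume "p \<in> {1..n} // ?R" "q \<in> {1..n} // ?R" "p \<noteq> q"
    then obtain x y where pq: "p = ?R``{x}" "q = ?R``{y}" unfolding quotient_def by blast
    show "disjnt p q"
    proof (rule ccontr)
      assume "\<not> disjnt p q"
      then obtain z where "z \<in> p" "z \<in> q" by (auto simp: disjnt_def)
      then have "(x,z) \<in> ?R" "(y,z) \<in> ?R" using pq by auto
      then have "(x,y) \<in> ?R" by (meson rtrancl_trans sym_Un_converse sym_def sym_rtrancl)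
      then have "p = q" using pq equiv_class_eq[OF eq] by simp
      then show False using \<open>p \<noteq> q\<close> by simp
    qed
  next
    show "{} \<notin> {1..n} // ?R" by (auto simp: quotient_def)
  qed
qed

lemma cg_part_edges: assumes cg: "chain_graph n E"
  shows "part_edges (components n E) = E"
proof -
  let ?R = "(E \<union> E\<inverse>)\<^sup>*"
  have eq: "equiv UNIV ?R" by (rule equiv_R)
  have fn: "\<And>x y y'. (x,y)\<in>E \<Longrightarrow> (x,y')\<in>E \<Longrightarrow> y = y'"
    and Es: "E \<subseteq> {(x,y). 1 \<le> x \<and> x < y \<and> y \<le> n}" using cg unfolding chain_graph_def by blast+
  have sameR: "(i,j) \<in> ?R" if h: "B \<in> {1..n} // ?R" "i \<in> B" "j \<in> B" for B i j
  proof -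
    obtain x where Bx: "B = ?R``{x}" using h(1) by (metis quotientE)
    then have "(x,i) \<in> ?R" "(x,j) \<in> ?R" using h by auto
    then show ?thesis by (meson rtrancl_trans sym_Un_converse sym_def sym_rtrancl)
  qed
  show ?thesis unfolding cg_components_eq[OF cg]
  proof
    show "part_edges ({1..n} // ?R) \<subseteq> E"
    proof
      fix e assume "e \<in> part_edges ({1..n} // ?R)"
      then obtain i j B where e: "e = (i,j)" and B: "B \<in> {1..n} // ?R" "i \<in> B" "j \<in> B" "i < j"
        and gap: "\<forall>k\<in>B. \<not> (i < k \<and> k < j)" by (auto simp: part_edges_def)
      have "(i,j) \<in> ?R" using sameR B by blast
      then have "(i,j) \<in> E\<^sup>*" using cg_conn[OF cg] cg_mono[OF cg, of j i] B(4) by fastforce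
      then obtain m where m: "(i,m) \<in> E" "(m,j) \<in> E\<^sup>*" using B(4) by (auto elim: converse_rtranclE)
      have "m \<le> j" using cg_mono[OF cg m(2)] .
      have "i < m" using m(1) Es by auto
      obtain x where Bx: "B = ?R``{x}" using B by (auto simp: quotient_def)
      have "(x,i) \<in> ?R" using Bx B by auto
      then have "(x,m) \<in> ?R" using m(1) by (meson UnI1 rtrancl.rtrancl_into_rtrancl)
      then have "m \<in> B" using Bx by auto
      then have "m = j" using gap \<open>i < m\<close> \<open>m \<le> j\<close> by fastforce
      then show "e \<in> E" using m e by simp
    qed
  next
    show "E \<subseteq> part_edges ({1..n} // ?R)"
    proof
      fix e assume e: "e \<in> E"
      then obtain i j where ij: "e = (i,j)" "1 \<le> i" "i < j" "j \<le> n" using Es by auto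
      let ?B = "?R``{i}"
      have B: "?B \<in> {1..n} // ?R" using ij by (auto simp: quotient_def)
      have jB: "j \<in> ?B" using e ij by auto
      have gap: "\<not> (i < k \<and> k < j)" if "k \<in> ?B" for k
      proof
        assume ik: "i < k \<and> k < j"
        have "(i,k) \<in> E\<^sup>* \<or> (k,i) \<in> E\<^sup>*" using cg_conn[OF cg] that by auto
        then show False
        proof
          assume a: "(i,k) \<in> E\<^sup>*"
          then obtain m where "(i,m) \<in> E" "(m,k) \<in> E\<^sup>*" using ik by (auto elim: converse_rtranclE)
          then have "j \<le> k" using fn[of i m j] e ij cg_mono[OF cg] by auto
          then show False using ik by simp
        next
          assume "(k,i) \<in> E\<^sup>*" then show False using cg_mono[OF cg] ik by fastforce
        qed
      qed
      show "e \<in> part_edges ({1..n} // ?R)" unfolding part_edges_def using B jB gap ij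
        by blast
    qed
  qed
qed




lemma pe_cg: assumes P: "partition_on {1..n} P" shows "chain_graph n (part_edges P)"
proof -
  have sub: "B \<subseteq> {1..n}" if "B \<in> P" for B using P that by (auto simp: partition_on_def)
  have uniq: "B = B'" if "B \<in> P" "B' \<in> P" "x \<in> B" "x \<in> B'" for B B' x
    using P that by (meson disjnt_iff partition_on_def pairwise_def)
  show ?thesis unfolding chain_graph_def
  proof (intro conjI allI impI)
    show "part_edges P \<subseteq> {(x,y). 1 \<le> x \<and> x < y \<and> y \<le> n}"
      using sub by (fastforce simp: part_edges_def)
  next
    fix x y y' assume a: "(x,y) \<in> part_edges P" "(x,y') \<in> part_edges P"
    then obtain B B' where "B\<in>P" "x\<in>B" "y\<in>B" "x<y" "\<forall>k\<in>B. \<not>(x<k \<and> k<y)"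
       "B'\<in>P" "x\<in>B'" "y'\<in>B'" "x<y'" "\<forall>k\<in>B'. \<not>(x<k \<and> k<y')" by (auto simp: part_edges_def)
    moreover then have "B = B'" using uniq by blast
    ultimately show "y = y'" by (metis linorder_neqE_nat)
  next
    fix x x' y assume a: "(x,y) \<in> part_edges P" "(x',y) \<in> part_edges P"
    then obtain B B' where "B\<in>P" "x\<in>B" "y\<in>B" "x<y" "\<forall>k\<in>B. \<not>(x<k \<and> k<y)"
       "B'\<in>P" "x'\<in>B'" "y\<in>B'" "x'<y" "\<forall>k\<in>B'. \<not>(x'<k \<and> k<y)" by (auto simp: part_edges_def)
    moreover then have "B = B'" using uniq by blast
    ultimately show "x = x'" by (metis linorder_neqE_nat)
  qed
qed

lemma pe_conn: assumes P: "partition_on {1..n} P" and B: "B \<in> P"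
  shows "\<forall>a. a \<in> B \<longrightarrow> b \<in> B \<longrightarrow> a < b \<longrightarrow> (a,b) \<in> (part_edges P)\<^sup>*"
proof (induction b rule: less_induct)
  case (less b)
  have "B \<subseteq> {1..n}" using P B by (auto simp: partition_on_def)
  then have finB: "finite B" using finite_subset by blast
  show ?case
  proof (intro allI impI)
    fix a assume a: "a \<in> B" "b \<in> B" "a < b"
    let ?S = "{k\<in>B. k < b}"
    have ne: "a \<in> ?S" using a by simp
    have fS: "finite ?S" using finB by simp
    define m where "m = Max ?S"
    have mS: "m \<in> ?S" unfolding m_def using fS ne by (intro Max_in) auto
    have mb: "a \<le> m" unfolding m_def using fS ne by (rule Max_ge)
    have gap: "\<forall>k\<in>B. \<not> (m < k \<and> k < b)" unfolding m_def using fS by (auto simp: not_less)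
    have e: "(m,b) \<in> part_edges P" unfolding part_edges_def using B a mS gap by blast
    show "(a,b) \<in> (part_edges P)\<^sup>*"
    proof (cases "m = a")
      case True then show ?thesis using e by auto
    next
      case False
      then have "a < m" using mb by simp
      have "(a,m) \<in> (part_edges P)\<^sup>*" using less[of m] a mS \<open>a < m\<close> by auto
      then show ?thesis using e by (meson rtrancl_into_rtrancl)
    qed
  qed
qed

lemma pe_components: assumes P: "partition_on {1..n} P"
  shows "components n (part_edges P) = P"
proof -
  let ?S = "part_edges P"
  let ?R = "(?S \<union> ?S\<inverse>)\<^sup>*"
  have uniq: "B = B'" if "B \<in> P" "B' \<in> P" "x \<in> B" "x \<in> B'" for B B' x
    using P that by (meson disjnt_iff partition_on_def pairwise_def)
  have cls: "?R``{x} = B" if B: "B \<in> P" and x: "x \<in> B" for B x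
  proof
    show "?R``{x} \<subseteq> B"
    proof
      fix k assume "k \<in> ?R``{x}"
      then have "(x,k) \<in> ?R" by simp
      then show "k \<in> B"
      proof (induction rule: rtrancl_induct)
        case base then show ?case using x .
      next
        case (step k k')
        then obtain B' where "B' \<in> P" "k \<in> B'" "k' \<in> B'" by (auto simp: part_edges_def)
        then show ?case using uniq[of B B' k] B step.IH by auto
      qed
    qed
  next
    show "B \<subseteq> ?R``{x}"
    proof
      fix k assume k: "k \<in> B"
      have sub: "?S\<^sup>* \<subseteq> ?R" by (rule rtrancl_mono) blast
      consider "k = x" | "x < k" | "k < x" by linarith
      then show "k \<in> ?R``{x}"
      proof cases
        case 1 then show ?thesis by simp
      next
        case 2 then show ?thesis using pe_conn[OF P B, of k] x k sub by auto
      next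
        case 3
        then have "(k,x) \<in> ?R" using pe_conn[OF P B, of x] x k sub by auto
        then show ?thesis by (simp add: sym_Un_converse sym_rtrancl symD)
      qed
    qed
  qed
  have "{1..n} // ?R = P"
  proof
    show "{1..n} // ?R \<subseteq> P"
    proof
      fix C assume "C \<in> {1..n} // ?R"
      then obtain x where x: "x \<in> {1..n}" "C = ?R``{x}" by (metis quotientE)
      then obtain B where "B \<in> P" "x \<in> B" using P partition_onD1[OF P] by blast
      then show "C \<in> P" using cls x by auto
    qed
  next
    show "P \<subseteq> {1..n} // ?R"
    proof
      fix B assume B: "B \<in> P"
      have "B \<noteq> {}" using P B partition_onD3 by blast
      then obtain x where x: "x \<in> B" by blast
      then have "x \<in> {1..n}" using P B by (auto simp: partition_on_def)
      then show "B \<in> {1..n} // ?R" using cls[OF B x] by (auto simp: quotient_def)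
    qed
  qed
  then show ?thesis using cg_components_eq[OF pe_cg[OF P]] by simp
qed



lemma gen_inv:
  assumes selok: "\<And>V. finite V \<Longrightarrow> V \<noteq> {} \<Longrightarrow> sel V 1 \<in> V"
  shows "t \<le> length w \<Longrightarrow> (\<forall>i<t. w!i \<in> {SE,EB} \<longrightarrow> fst (st sel w i) \<noteq> {}) \<Longrightarrow>
         ginv w (fst (st sel w t)) (snd (st sel w t)) t"
proof (induction t)
  case 0 then show ?case by (simp add: ginv_0)
next
  case (Suc t)
  have t: "t < length w" using Suc.prems by simp
  have g: "ginv w (fst (st sel w t)) (snd (st sel w t)) t" using Suc by simp
  have ne: "w!t \<in> {SE,EB} \<Longrightarrow> fst (st sel w t) \<noteq> {}" using Suc.prems(2) lessI by blast
  show ?case using ginv_step[where sel=sel, OF g t ne selok] st_Suc_split[OF t, of sel] by (simp add: Let_def)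
qed

lemma mrb_H:
  assumes w: "w \<in> Mrb n" and selok: "\<And>V. finite V \<Longrightarrow> V \<noteq> {} \<Longrightarrow> sel V 1 \<in> V"
  shows "\<forall>i<length w. w!i \<in> {SE,EB} \<longrightarrow> fst (st sel w i) \<noteq> {}"
proof -
  have mot: "\<forall>k \<le> length w. ht (take k w) \<ge> 0" and eb: "\<forall>i < length w. w ! i = EB \<longrightarrow> ht (take i w) > 0"
    using w by (auto simp: Mrb_def motzkin_def)
  have "t \<le> length w \<Longrightarrow> \<forall>i<t. w!i \<in> {SE,EB} \<longrightarrow> fst (st sel w i) \<noteq> {}" for t
  proof (induction t)
    case 0 then show ?case by simp
  next
    case (Suc t)
    have t: "t < length w" using Suc.prems by simp
    have IH: "\<forall>i<t. w!i \<in> {SE,EB} \<longrightarrow> fst (st sel w i) \<noteq> {}" using Suc by simp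
    have g: "ginv w (fst (st sel w t)) (snd (st sel w t)) t" using gen_inv[of sel, OF selok] t IH by simp
    then have c: "int (card (fst (st sel w t))) = ht (take t w)" by (simp add: ginv_def)
    have "w!t \<in> {SE,EB} \<Longrightarrow> ht (take t w) > 0"
    proof -
      assume a: "w!t \<in> {SE,EB}"
      show ?thesis
      proof (cases "w!t")
        case SE
        have "ht (take (Suc t) w) \<ge> 0" using mot t by simp
        then show ?thesis using ht_Suc[OF t] SE by simp
      next
        case EB then show ?thesis using eb t by simp
      qed (use a in auto)
    qed
    then have "w!t \<in> {SE,EB} \<Longrightarrow> fst (st sel w t) \<noteq> {}" using c by auto
    then show ?case using IH less_Suc_eq by auto
  qed
  from this[of "length w"] show ?thesis by simp
qed

lemma mrb_final:
  assumes w: "w \<in> Mrb n" and selok: "\<And>V. finite V \<Longrightarrow> V \<noteq> {} \<Longrightarrow> sel V 1 \<in> V"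
  shows "chain_graph n (snd (st sel w n)) \<and> Domain (snd (st sel w n)) = Os w n \<and>
         Range (snd (st sel w n)) = Is w n \<and> fst (st sel w n) = {}"
proof -
  have l: "length w = n" using w by (simp add: Mrb_def)
  have g: "ginv w (fst (st sel w n)) (snd (st sel w n)) n"
    using gen_inv[of sel, OF selok, of n w] mrb_H[of w n sel, OF w selok] l by simp
  have "ht w = 0" using w by (simp add: Mrb_def motzkin_def)
  moreover have "take n w = w" using l by simp
  ultimately have "card (fst (st sel w n)) = 0" "finite (fst (st sel w n))" using g by (simp_all add: ginv_def)
  then have "fst (st sel w n) = {}" by simp
  then show ?thesis using g by (simp add: ginv_def chain_graph_def)
qed

lemma kth_smallest_1: "finite V \<Longrightarrow> V \<noteq> {} \<Longrightarrow> kth_smallest V 1 = Min V"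
  by (simp add: kth_smallest_def sorted_list_of_set_nonempty)

lemma sorted_last_Max: "sorted xs \<Longrightarrow> xs \<noteq> [] \<Longrightarrow> last xs = Max (set xs)"
proof -
  assume s: "sorted xs" and ne: "xs \<noteq> []"
  have "Max (set xs) \<in> set xs" using ne by simp
  then obtain j where j: "j < length xs" "xs!j = Max (set xs)" by (metis in_set_conv_nth)
  have b: "xs!j \<le> xs!(length xs - 1)" using s j by (intro sorted_nth_mono) auto
  have "xs!(length xs - 1) \<in> set xs" using ne by simp
  then have a: "xs!(length xs - 1) \<le> Max (set xs)" by simp
  have "xs!(length xs - 1) = Max (set xs)" using a b j(2) by (intro order.antisym) auto
  then show ?thesis using ne by (simp add: last_conv_nth)
qed

lemma kth_largest_1: "finite V \<Longrightarrow> V \<noteq> {} \<Longrightarrow> kth_largest V 1 = Max V"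
proof -
  assume f: "finite V" and ne: "V \<noteq> {}"
  have ne2: "sorted_list_of_set V \<noteq> []" using f ne by simp
  have "kth_largest V 1 = last (sorted_list_of_set V)"
    using ne2 by (simp add: kth_largest_def hd_conv_nth[symmetric] hd_rev)
  also have "\<dots> = Max V" using sorted_last_Max[OF _ ne2] f by simp
  finally show ?thesis .
qed

lemma selok_l: "finite V \<Longrightarrow> V \<noteq> {} \<Longrightarrow> kth_smallest V 1 \<in> V"
  by (metis kth_smallest_1 Min_in)
lemma selok_r: "finite V \<Longrightarrow> V \<noteq> {} \<Longrightarrow> kth_largest V 1 \<in> V"
  by (metis kth_largest_1 Max_in)



definition ncinv :: "nat set \<Rightarrow> (nat \<times> nat) set \<Rightarrow> bool" where
  "ncinv V E \<longleftrightarrow> (\<forall>i1 j1 i2 j2. (i1,j1)\<in>E \<longrightarrow> (i2,j2)\<in>E \<longrightarrow> \<not>(i1<i2 \<and> i2<j1 \<and> j1<j2)) \<and>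
      (\<forall>x\<in>V. \<forall>i j. (i,j)\<in>E \<longrightarrow> \<not>(i<x \<and> x<j))"

definition nninv :: "nat set \<Rightarrow> (nat \<times> nat) set \<Rightarrow> bool" where
  "nninv V E \<longleftrightarrow> (\<forall>i1 j1 i2 j2. (i1,j1)\<in>E \<longrightarrow> (i2,j2)\<in>E \<longrightarrow> \<not>(i1<i2 \<and> i2<j2 \<and> j2<j1)) \<and>
      (\<forall>x\<in>V. \<forall>i j. (i,j)\<in>E \<longrightarrow> \<not>(x<i))"

lemma nc_NE: assumes nc: "ncinv V E" and Ej: "\<And>i j. (i,j) \<in> E \<Longrightarrow> j \<le> t"
  shows "ncinv (insert (Suc t) V) E"
  unfolding ncinv_def
proof (intro conjI ballI allI impI notI)
  fix i1 j1 i2 j2 assume "(i1,j1)\<in>E" "(i2,j2)\<in>E" "i1<i2 \<and> i2<j1 \<and> j1<j2"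
  then show False using nc unfolding ncinv_def by blast
next
  fix x i j assume x: "x \<in> insert (Suc t) V" and e: "(i,j) \<in> E" and c: "i < x \<and> x < j"
  show False
  proof (cases "x = Suc t")
    case True then show False using Ej[OF e] c by simp
  next
    case False then have "x \<in> V" using x by simp
    then show False using nc e c unfolding ncinv_def by blast
  qed
qed

lemma nc_SE: assumes nc: "ncinv V E" and Ej: "\<And>i j. (i,j) \<in> E \<Longrightarrow> j \<le> t"
  and pV: "p \<in> V" and mx: "\<And>x. x \<in> V \<Longrightarrow> x \<le> p" and V': "V' = V - {p} \<or> V' = insert (Suc t) (V - {p})"
  shows "ncinv V' (insert (p, Suc t) E)"
  unfolding ncinv_def
proof (intro conjI ballI allI impI notI)
  have c1: "\<not>(i1<i2 \<and> i2<j1 \<and> j1<j2)" if "(i1,j1)\<in>E" "(i2,j2)\<in>E" for i1 j1 i2 j2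
    using nc that unfolding ncinv_def by blast
  have c2: "\<not>(i<x \<and> x<j)" if "x \<in> V" "(i,j)\<in>E" for x i j
    using nc that unfolding ncinv_def by blast
  fix i1 j1 i2 j2 assume e1: "(i1,j1)\<in>insert (p, Suc t) E" and e2: "(i2,j2)\<in>insert (p, Suc t) E"
    and c: "i1<i2 \<and> i2<j1 \<and> j1<j2"
  show False
  proof (cases "(i1,j1) = (p, Suc t)")
    case True
    then have "(i2,j2) \<in> E" using e2 c by auto
    then show False using Ej[of i2 j2] c True by simp
  next
    case False
    then have o1: "(i1,j1) \<in> E" using e1 by blast
    show False
    proof (cases "(i2,j2) = (p, Suc t)")
      case True then show False using c2[OF pV o1] c Ej[OF o1] by auto
    next
      case False then show False using c1[OF o1] e2 c by auto
    qed
  qed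
next
  have c2: "\<not>(i<x \<and> x<j)" if "x \<in> V" "(i,j)\<in>E" for x i j
    using nc that unfolding ncinv_def by blast
  fix x i j assume x: "x \<in> V'" and e: "(i,j) \<in> insert (p, Suc t) E" and c: "i < x \<and> x < j"
  show False
  proof (cases "x = Suc t")
    case True
    then show False using e c Ej[of i j] by auto
  next
    case False
    then have xV: "x \<in> V" "x \<noteq> p" using x V' by auto
    show False
    proof (cases "(i,j) = (p, Suc t)")
      case True then show False using mx[OF xV(1)] c by auto
    next
      case False then show False using c2[OF xV(1), of i j] e c by auto
    qed
  qed
qed

lemma nn_NE: assumes nc: "nninv V E" and Ej: "\<And>i j. (i,j) \<in> E \<Longrightarrow> i < j \<and> j \<le> t"
  shows "nninv (insert (Suc t) V) E"
  unfolding nninv_def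
proof (intro conjI ballI allI impI notI)
  fix i1 j1 i2 j2 assume "(i1,j1)\<in>E" "(i2,j2)\<in>E" "i1<i2 \<and> i2<j2 \<and> j2<j1"
  then show False using nc unfolding nninv_def by blast
next
  fix x i j assume x: "x \<in> insert (Suc t) V" and e: "(i,j) \<in> E" and c: "x < i"
  show False
  proof (cases "x = Suc t")
    case True then show False using Ej[OF e] c by simp
  next
    case False then have "x \<in> V" using x by simp
    then show False using nc e c unfolding nninv_def by blast
  qed
qed

lemma nn_SE: assumes nc: "nninv V E" and Ej: "\<And>i j. (i,j) \<in> E \<Longrightarrow> i < j \<and> j \<le> t"
  and pV: "p \<in> V" and mx: "\<And>x. x \<in> V \<Longrightarrow> p \<le> x" and pt: "p \<le> t"
  and V': "V' = V - {p} \<or> V' = insert (Suc t) (V - {p})"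
  shows "nninv V' (insert (p, Suc t) E)"
  unfolding nninv_def
proof (intro conjI ballI allI impI notI)
  have c1: "\<not>(i1<i2 \<and> i2<j2 \<and> j2<j1)" if "(i1,j1)\<in>E" "(i2,j2)\<in>E" for i1 j1 i2 j2
    using nc that unfolding nninv_def by blast
  have c2: "\<not>(x<i)" if "x \<in> V" "(i,j)\<in>E" for x i j
    using nc that unfolding nninv_def by blast
  fix i1 j1 i2 j2 assume e1: "(i1,j1)\<in>insert (p, Suc t) E" and e2: "(i2,j2)\<in>insert (p, Suc t) E"
    and c: "i1<i2 \<and> i2<j2 \<and> j2<j1"
  show False
  proof (cases "(i1,j1) = (p, Suc t)")
    case True
    then have o2: "(i2,j2) \<in> E" using e2 c by auto
    then show False using c2[OF pV o2] c True by simp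
  next
    case False
    then have o1: "(i1,j1) \<in> E" using e1 by blast
    show False
    proof (cases "(i2,j2) = (p, Suc t)")
      case True then show False using c Ej[OF o1] by auto
    next
      case False then show False using c1[OF o1] e2 c by auto
    qed
  qed
next
  have c2: "\<not>(x<i)" if "x \<in> V" "(i,j)\<in>E" for x i j
    using nc that unfolding nninv_def by blast
  fix x i j assume x: "x \<in> V'" and e: "(i,j) \<in> insert (p, Suc t) E" and c: "x < i"
  show False
  proof (cases "x = Suc t")
    case True
    then show False using e c Ej[of i j] pt by auto
  next
    case False
    then have xV: "x \<in> V" "x \<noteq> p" using x V' by auto
    show False
    proof (cases "(i,j) = (p, Suc t)")
      case True then show False using mx[OF xV(1)] c by auto
    next
      case False then show False using c2[OF xV(1), of i] e c by auto
    qed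
  qed
qed

lemma ncinv_step:
  assumes g: "ginv w V E t" and t: "t < length w" and ne: "w!t \<in> {SE,EB} \<Longrightarrow> V \<noteq> {}"
    and nc: "ncinv V E"
  shows "ncinv (case w!t of NE \<Rightarrow> insert (Suc t) V | ER \<Rightarrow> V
            | SE \<Rightarrow> V - {kth_largest V 1} | EB \<Rightarrow> insert (Suc t) (V - {kth_largest V 1}))
          (case w!t of NE \<Rightarrow> E | ER \<Rightarrow> E
            | SE \<Rightarrow> insert (kth_largest V 1, Suc t) E | EB \<Rightarrow> insert (kth_largest V 1, Suc t) E)"
proof -
  have fin: "finite V" and VO: "V \<subseteq> Os w t" 
    and Es: "E \<subseteq> {(x,y). 1 \<le> x \<and> x < y \<and> y \<le> t}" using g by (auto simp: ginv_def)
  have Vt: "\<And>x. x \<in> V \<Longrightarrow> x \<le> t" using VO Os_sub by fastforce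
  have Ej: "\<And>i j. (i,j) \<in> E \<Longrightarrow> j \<le> t" using Es by auto
  show ?thesis
  proof (cases "w!t")
    case NE then show ?thesis using nc_NE[OF nc, of t] Ej by simp
  next
    case ER then show ?thesis using nc by simp
  next
    case SE
    then have Vne: "V \<noteq> {}" using ne by simp
    have p: "kth_largest V 1 = Max V" using kth_largest_1[OF fin Vne] .
    have pV: "Max V \<in> V" using fin Vne by simp
    have mx: "\<And>x. x \<in> V \<Longrightarrow> x \<le> Max V" using fin by simp
    show ?thesis using SE p nc_SE[OF nc Ej pV mx, where V'="V - {Max V}"] by simp
  next
    case EB
    then have Vne: "V \<noteq> {}" using ne by simp
    have p: "kth_largest V 1 = Max V" using kth_largest_1[OF fin Vne] .
    have pV: "Max V \<in> V" using fin Vne by simp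
    have mx: "\<And>x. x \<in> V \<Longrightarrow> x \<le> Max V" using fin by simp
    show ?thesis using EB p nc_SE[OF nc Ej pV mx, where V'="insert (Suc t) (V - {Max V})"] by simp
  qed
qed

lemma nninv_step:
  assumes g: "ginv w V E t" and t: "t < length w" and ne: "w!t \<in> {SE,EB} \<Longrightarrow> V \<noteq> {}"
    and nc: "nninv V E"
  shows "nninv (case w!t of NE \<Rightarrow> insert (Suc t) V | ER \<Rightarrow> V
            | SE \<Rightarrow> V - {kth_smallest V 1} | EB \<Rightarrow> insert (Suc t) (V - {kth_smallest V 1}))
          (case w!t of NE \<Rightarrow> E | ER \<Rightarrow> E
            | SE \<Rightarrow> insert (kth_smallest V 1, Suc t) E | EB \<Rightarrow> insert (kth_smallest V 1, Suc t) E)"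
proof -
  have fin: "finite V" and VO: "V \<subseteq> Os w t" 
    and Es: "E \<subseteq> {(x,y). 1 \<le> x \<and> x < y \<and> y \<le> t}" using g by (auto simp: ginv_def)
  have Vt: "\<And>x. x \<in> V \<Longrightarrow> x \<le> t" using VO Os_sub by fastforce
  have Ej: "\<And>i j. (i,j) \<in> E \<Longrightarrow> i < j \<and> j \<le> t" using Es by auto
  show ?thesis
  proof (cases "w!t")
    case NE then show ?thesis using nn_NE[OF nc, of t] Ej by simp
  next
    case ER then show ?thesis using nc by simp
  next
    case SE
    then have Vne: "V \<noteq> {}" using ne by simp
    have p: "kth_smallest V 1 = Min V" using kth_smallest_1[OF fin Vne] .
    have pV: "Min V \<in> V" using fin Vne by simp
    have mx: "\<And>x. x \<in> V \<Longrightarrow> Min V \<le> x" using fin by simp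
    show ?thesis using SE p nn_SE[OF nc Ej pV mx Vt[OF pV], where V'="V - {Min V}"] by simp
  next
    case EB
    then have Vne: "V \<noteq> {}" using ne by simp
    have p: "kth_smallest V 1 = Min V" using kth_smallest_1[OF fin Vne] .
    have pV: "Min V \<in> V" using fin Vne by simp
    have mx: "\<And>x. x \<in> V \<Longrightarrow> Min V \<le> x" using fin by simp
    show ?thesis using EB p nn_SE[OF nc Ej pV mx Vt[OF pV], where V'="insert (Suc t) (V - {Min V})"] by simp
  qed
qed



lemma nc_final: assumes w: "w \<in> Mrb n"
  shows "ncinv (fst (st kth_largest w n)) (snd (st kth_largest w n))"
proof -
  have l: "length w = n" using w by (simp add: Mrb_def)
  have H: "\<forall>i<length w. w!i \<in> {SE,EB} \<longrightarrow> fst (st kth_largest w i) \<noteq> {}"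
    using mrb_H[of w n kth_largest, OF w selok_r] .
  have "t \<le> length w \<Longrightarrow> ncinv (fst (st kth_largest w t)) (snd (st kth_largest w t))" for t
  proof (induction t)
    case 0 then show ?case by (simp add: ncinv_def)
  next
    case (Suc t)
    have t: "t < length w" using Suc.prems by simp
    have g: "ginv w (fst (st kth_largest w t)) (snd (st kth_largest w t)) t"
      using gen_inv[of kth_largest, OF selok_r, of t w] H t by simp
    have ne: "w!t \<in> {SE,EB} \<Longrightarrow> fst (st kth_largest w t) \<noteq> {}" using H t by blast
    show ?case using ncinv_step[OF g t ne] Suc t st_Suc_split[OF t, of kth_largest] by (simp add: Let_def)
  qed
  then show ?thesis using l by simp
qed

lemma nn_final: assumes w: "w \<in> Mrb n"
  shows "nninv (fst (st kth_smallest w n)) (snd (st kth_smallest w n))"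
proof -
  have l: "length w = n" using w by (simp add: Mrb_def)
  have H: "\<forall>i<length w. w!i \<in> {SE,EB} \<longrightarrow> fst (st kth_smallest w i) \<noteq> {}"
    using mrb_H[of w n kth_smallest, OF w selok_l] .
  have "t \<le> length w \<Longrightarrow> nninv (fst (st kth_smallest w t)) (snd (st kth_smallest w t))" for t
  proof (induction t)
    case 0 then show ?case by (simp add: nninv_def)
  next
    case (Suc t)
    have t: "t < length w" using Suc.prems by simp
    have g: "ginv w (fst (st kth_smallest w t)) (snd (st kth_smallest w t)) t"
      using gen_inv[of kth_smallest, OF selok_l, of t w] H t by simp
    have ne: "w!t \<in> {SE,EB} \<Longrightarrow> fst (st kth_smallest w t) \<noteq> {}" using H t by blast
    show ?case using nninv_step[OF g t ne] Suc t st_Suc_split[OF t, of kth_smallest] by (simp add: Let_def)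
  qed
  then show ?thesis using l by simp
qed

lemma r_image: assumes w: "w \<in> Mrb n" shows "phi_r w (replicate n 1) \<in> NC n"
proof -
  have l: "length w = n" using w by (simp add: Mrb_def)
  let ?E = "snd (st kth_largest w n)"
  have eq: "phi_r w (replicate n 1) = components n ?E"
    by (simp only: phi_r_def l phi_edges_st[OF l])
  have cg: "chain_graph n ?E" using mrb_final[of w n kth_largest, OF w selok_r] by simp
  have pe: "part_edges (components n ?E) = ?E" by (rule cg_part_edges[OF cg])
  have "noncrossing (components n ?E)" using nc_final[OF w] unfolding noncrossing_def pe ncinv_def by blast
  then show ?thesis using eq cg_partition[OF cg] by (simp add: NC_def)
qed

lemma l_image: assumes w: "w \<in> Mrb n" shows "phi_l w (replicate n 1) \<in> NN n"
proof -
  have l: "length w = n" using w by (simp add: Mrb_def)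
  let ?E = "snd (st kth_smallest w n)"
  have eq: "phi_l w (replicate n 1) = components n ?E"
    by (simp only: phi_l_def l phi_edges_st[OF l])
  have cg: "chain_graph n ?E" using mrb_final[of w n kth_smallest, OF w selok_l] by simp
  have pe: "part_edges (components n ?E) = ?E" by (rule cg_part_edges[OF cg])
  have "nonnesting (components n ?E)" using nn_final[OF w] unfolding nonnesting_def pe nninv_def by blast
  then show ?thesis using eq cg_partition[OF cg] by (simp add: NN_def)
qed

lemma inj_gen:
  assumes selok: "\<And>V. finite V \<Longrightarrow> V \<noteq> {} \<Longrightarrow> sel V 1 \<in> V"
    and w1: "w1 \<in> Mrb n" and w2: "w2 \<in> Mrb n"
    and eq: "components n (snd (st sel w1 n)) = components n (snd (st sel w2 n))"
  shows "w1 = w2"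
proof -
  have l1: "length w1 = n" using w1 by (simp add: Mrb_def)
  have l2: "length w2 = n" using w2 by (simp add: Mrb_def)
  have f1: "chain_graph n (snd (st sel w1 n)) \<and> Domain (snd (st sel w1 n)) = Os w1 n \<and> Range (snd (st sel w1 n)) = Is w1 n"
    using mrb_final[of w1 n sel, OF w1 selok] by simp
  have f2: "chain_graph n (snd (st sel w2 n)) \<and> Domain (snd (st sel w2 n)) = Os w2 n \<and> Range (snd (st sel w2 n)) = Is w2 n"
    using mrb_final[of w2 n sel, OF w2 selok] by simp
  have "snd (st sel w1 n) = snd (st sel w2 n)"
    using cg_part_edges[of n "snd (st sel w1 n)"] cg_part_edges[of n "snd (st sel w2 n)"] f1 f2 eq by metis
  then have O: "Os w1 n = Os w2 n" and I: "Is w1 n = Is w2 n" using f1 f2 by auto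
  show ?thesis
  proof (rule nth_equalityI)
    show "length w1 = length w2" using l1 l2 by simp
  next
    fix i assume "i < length w1"
    then have i: "i < n" using l1 by simp
    have "Suc i \<in> Os w1 n \<longleftrightarrow> w1!i \<in> {NE,EB}" "Suc i \<in> Os w2 n \<longleftrightarrow> w2!i \<in> {NE,EB}"
      "Suc i \<in> Is w1 n \<longleftrightarrow> w1!i \<in> {SE,EB}" "Suc i \<in> Is w2 n \<longleftrightarrow> w2!i \<in> {SE,EB}"
      using i by (auto simp: Os_def Is_def)
    then have a: "w1!i \<in> {NE,EB} \<longleftrightarrow> w2!i \<in> {NE,EB}" "w1!i \<in> {SE,EB} \<longleftrightarrow> w2!i \<in> {SE,EB}"
      using O I by auto
    show "w1!i = w2!i" using a by (cases "w1!i"; cases "w2!i"; simp)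
  qed
qed

definition word :: "nat \<Rightarrow> (nat \<times> nat) set \<Rightarrow> step list" where
  "word n S = map (\<lambda>i. if i \<in> Domain S then (if i \<in> Range S then EB else NE)
                        else (if i \<in> Range S then SE else ER)) [1..<n+1]"

definition Vs :: "(nat \<times> nat) set \<Rightarrow> nat \<Rightarrow> nat set" where
  "Vs S t = {x. \<exists>y. (x,y) \<in> S \<and> x \<le> t \<and> t < y}"

lemma word_nth: "t < n \<Longrightarrow> word n S ! t = (if Suc t \<in> Domain S then (if Suc t \<in> Range S then EB else NE)
                        else (if Suc t \<in> Range S then SE else ER))"
  by (simp add: word_def nth_map del: upt_Suc)

lemma word_len[simp]: "length (word n S) = n" by (simp add: word_def)

lemma surj_sim:
  assumes cg: "chain_graph n S"
    and selp: "\<And>t p. t < n \<Longrightarrow> (p, Suc t) \<in> S \<Longrightarrow> sel (Vs S t) 1 = p"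
  shows "t \<le> n \<Longrightarrow> st sel (word n S) t = (Vs S t, {(x,y)\<in>S. y \<le> t})"
proof (induction t)
  case 0
  have "Vs S 0 = {}" using cg unfolding chain_graph_def Vs_def by auto
  moreover have "{(x,y)\<in>S. y \<le> 0} = {}" using cg unfolding chain_graph_def by auto
  ultimately show ?case by simp
next
  case (Suc t)
  have t: "t < n" using Suc.prems by simp
  have IH: "st sel (word n S) t = (Vs S t, {(x,y)\<in>S. y \<le> t})" using Suc by simp
  have Es: "\<And>x y. (x,y) \<in> S \<Longrightarrow> 1 \<le> x \<and> x < y \<and> y \<le> n"
    and fn: "\<And>x y y'. (x,y)\<in>S \<Longrightarrow> (x,y')\<in>S \<Longrightarrow> y = y'"
    and inj: "\<And>x x' y. (x,y)\<in>S \<Longrightarrow> (x',y)\<in>S \<Longrightarrow> x = x'" using cg unfolding chain_graph_def by blast+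
  have st1: "st sel (word n S) (Suc t) = phi_step sel (Vs S t, {(x,y)\<in>S. y \<le> t}) (Suc t, word n S ! t, 1)"
    using st_Suc[of t "word n S" sel] t IH by simp
  have Eeq1: "{(x,y)\<in>S. y \<le> Suc t} = {(x,y)\<in>S. y \<le> t}" if "Suc t \<notin> Range S"
    using that le_Suc_eq by auto
  have Eeq2: "{(x,y)\<in>S. y \<le> Suc t} = insert (p, Suc t) {(x,y)\<in>S. y \<le> t}" if "(p, Suc t) \<in> S" for p
    using that le_Suc_eq inj by auto
  have Vin: "Vs S (Suc t) = insert (Suc t) (Vs S t)" if dR: "Suc t \<in> Domain S" "Suc t \<notin> Range S"
  proof
    show "Vs S (Suc t) \<subseteq> insert (Suc t) (Vs S t)"
    proof
      fix x assume "x \<in> Vs S (Suc t)"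
      then obtain y where y: "(x,y) \<in> S" "x \<le> Suc t" "Suc t < y" by (auto simp: Vs_def)
      then show "x \<in> insert (Suc t) (Vs S t)" by (auto simp: Vs_def le_Suc_eq)
    qed
  next
    show "insert (Suc t) (Vs S t) \<subseteq> Vs S (Suc t)"
    proof
      fix x assume "x \<in> insert (Suc t) (Vs S t)"
      then consider "x = Suc t" | y where "(x,y) \<in> S" "x \<le> t" "t < y" by (auto simp: Vs_def)
      then show "x \<in> Vs S (Suc t)"
      proof cases
        case 1 then obtain y where "(x,y) \<in> S" using dR by auto
        then show ?thesis using Es 1 by (force simp: Vs_def)
      next
        case 2
        then have "y \<noteq> Suc t" using dR by auto
        then show ?thesis using 2 by (auto simp: Vs_def)
      qed
    qed
  qed
  have Vnone: "Vs S (Suc t) = Vs S t" if dR: "Suc t \<notin> Domain S" "Suc t \<notin> Range S"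
  proof
    show "Vs S (Suc t) \<subseteq> Vs S t"
    proof
      fix x assume "x \<in> Vs S (Suc t)"
      then obtain y where y: "(x,y) \<in> S" "x \<le> Suc t" "Suc t < y" by (auto simp: Vs_def)
      then have "x \<noteq> Suc t" using dR by auto
      then show "x \<in> Vs S t" using y by (auto simp: Vs_def le_Suc_eq)
    qed
  next
    show "Vs S t \<subseteq> Vs S (Suc t)"
    proof
      fix x assume "x \<in> Vs S t"
      then obtain y where y: "(x,y) \<in> S" "x \<le> t" "t < y" by (auto simp: Vs_def)
      then have "y \<noteq> Suc t" using dR by auto
      then show "x \<in> Vs S (Suc t)" using y by (auto simp: Vs_def)
    qed
  qed
  have Vrem: "Vs S (Suc t) = (if Suc t \<in> Domain S then insert (Suc t) (Vs S t - {p}) else Vs S t - {p})"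
    if p: "(p, Suc t) \<in> S" for p
  proof
    show "Vs S (Suc t) \<subseteq> (if Suc t \<in> Domain S then insert (Suc t) (Vs S t - {p}) else Vs S t - {p})"
    proof
      fix x assume "x \<in> Vs S (Suc t)"
      then obtain y where y: "(x,y) \<in> S" "x \<le> Suc t" "Suc t < y" by (auto simp: Vs_def)
      show "x \<in> (if Suc t \<in> Domain S then insert (Suc t) (Vs S t - {p}) else Vs S t - {p})"
      proof (cases "x = Suc t")
        case True then show ?thesis using y by auto
      next
        case False
        have "x \<noteq> p" using fn[OF p, of y] y by auto
        then show ?thesis using False y by (auto simp: Vs_def le_Suc_eq)
      qed
    qed
  next
    show "(if Suc t \<in> Domain S then insert (Suc t) (Vs S t - {p}) else Vs S t - {p}) \<subseteq> Vs S (Suc t)"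
    proof
      fix x assume x: "x \<in> (if Suc t \<in> Domain S then insert (Suc t) (Vs S t - {p}) else Vs S t - {p})"
      show "x \<in> Vs S (Suc t)"
      proof (cases "x = Suc t \<and> Suc t \<in> Domain S")
        case True then obtain y where "(x,y) \<in> S" by auto
        then show ?thesis using Es True by (force simp: Vs_def)
      next
        case False
        then have "x \<in> Vs S t" "x \<noteq> p" using x by (auto split: if_splits)
        then obtain y where y: "(x,y) \<in> S" "x \<le> t" "t < y" by (auto simp: Vs_def)
        have "y \<noteq> Suc t" using inj[OF p] y \<open>x \<noteq> p\<close> by auto
        then show ?thesis using y by (auto simp: Vs_def)
      qed
    qed
  qed
  show ?case
  proof (cases "Suc t \<in> Range S")
    case True
    then obtain p where p: "(p, Suc t) \<in> S" by auto
    have sp: "sel (Vs S t) 1 = p" using selp[OF t p] .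
    show ?thesis
    proof (cases "Suc t \<in> Domain S")
      case True
      then show ?thesis using st1 word_nth[OF t, of S] \<open>Suc t \<in> Range S\<close> sp Vrem[OF p] Eeq2[OF p] by simp
    next
      case False
      then show ?thesis using st1 word_nth[OF t, of S] \<open>Suc t \<in> Range S\<close> sp Vrem[OF p] Eeq2[OF p] by simp
    qed
  next
    case False
    show ?thesis
    proof (cases "Suc t \<in> Domain S")
      case True
      then show ?thesis using st1 word_nth[OF t, of S] False Vin Eeq1 by simp
    next
      case nd: False
      then show ?thesis using st1 word_nth[OF t, of S] False Vnone Eeq1 by simp
    qed
  qed
qed

lemma surj_gen:
  assumes selok: "\<And>V. finite V \<Longrightarrow> V \<noteq> {} \<Longrightarrow> sel V 1 \<in> V"
    and P: "partition_on {1..n} P"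
    and selp: "\<And>t p. t < n \<Longrightarrow> (p, Suc t) \<in> part_edges P \<Longrightarrow> sel (Vs (part_edges P) t) 1 = p"
  shows "word n (part_edges P) \<in> Mrb n \<and> components n (snd (st sel (word n (part_edges P)) n)) = P"
proof -
  let ?S = "part_edges P"
  let ?w = "word n ?S"
  have cg: "chain_graph n ?S" by (rule pe_cg[OF P])
  have Es: "\<And>x y. (x,y) \<in> ?S \<Longrightarrow> 1 \<le> x \<and> x < y \<and> y \<le> n" using cg unfolding chain_graph_def by blast
  have stt: "\<And>t. t \<le> n \<Longrightarrow> st sel ?w t = (Vs ?S t, {(x,y)\<in>?S. y \<le> t})"
    using surj_sim[where sel=sel, OF cg selp] by blast
  have finV: "finite (Vs ?S t)" for t
  proof -
    have "Vs ?S t \<subseteq> {..t}" by (auto simp: Vs_def)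
    then show ?thesis using finite_subset by blast
  qed
  have inV: "Vs ?S i \<noteq> {}" if i: "i < n" and r: "Suc i \<in> Range ?S" for i
  proof -
    obtain p where p: "(p, Suc i) \<in> ?S" using r by auto
    then have "p \<in> Vs ?S i" using Es[OF p] by (auto simp: Vs_def)
    then show ?thesis by auto
  qed
  have H: "\<forall>i<t. ?w!i \<in> {SE,EB} \<longrightarrow> fst (st sel ?w i) \<noteq> {}" if "t \<le> n" for t
  proof (intro allI impI)
    fix i assume i: "i < t" and s: "?w!i \<in> {SE,EB}"
    have "i < n" using i that by simp
    then have "Suc i \<in> Range ?S" using s word_nth[of i n ?S] by (auto split: if_splits)
    then show "fst (st sel ?w i) \<noteq> {}" using inV stt \<open>i < n\<close> by simp
  qed
  have cardt: "int (card (Vs ?S t)) = ht (take t ?w)" if "t \<le> n" for t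
    using gen_inv[of sel, OF selok, of t ?w] H[OF that] that stt[OF that] by (simp add: ginv_def)
  have Vn: "Vs ?S n = {}" using Es by (force simp: Vs_def)
  have mrb: "?w \<in> Mrb n"
    unfolding Mrb_def motzkin_def
  proof (intro CollectI conjI allI impI)
    show "length ?w = n" by simp
  next
    fix k assume "k \<le> length ?w"
    then show "0 \<le> ht (take k ?w)" using cardt[of k] by simp
  next
    show "ht ?w = 0" using cardt[of n] Vn by simp
  next
    fix i assume i: "i < length ?w" and e: "?w ! i = EB"
    then have "Suc i \<in> Range ?S" using word_nth[of i n ?S] by (auto split: if_splits)
    then have "Vs ?S i \<noteq> {}" using inV i by simp
    then have "card (Vs ?S i) > 0" using finV by (simp add: card_gt_0_iff)
    then show "0 < ht (take i ?w)" using cardt[of i] i by simp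
  qed
  have "{(x,y)\<in>?S. y \<le> n} = ?S" using Es by auto
  then have "snd (st sel ?w n) = ?S" using stt[of n] by simp
  then show ?thesis using mrb pe_components[OF P] by simp
qed

lemma selp_r: assumes P: "P \<in> NC n" and t: "t < n" and p: "(p, Suc t) \<in> part_edges P"
  shows "kth_largest (Vs (part_edges P) t) 1 = p"
proof -
  let ?S = "part_edges P"
  have Pp: "partition_on {1..n} P" and nc: "noncrossing P" using P by (auto simp: NC_def)
  have cg: "chain_graph n ?S" by (rule pe_cg[OF Pp])
  have Es: "\<And>x y. (x,y) \<in> ?S \<Longrightarrow> 1 \<le> x \<and> x < y \<and> y \<le> n"
    and inj: "\<And>x x' y. (x,y)\<in>?S \<Longrightarrow> (x',y)\<in>?S \<Longrightarrow> x = x'" using cg unfolding chain_graph_def by blast+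
  have fin: "finite (Vs ?S t)"
  proof -
    have "Vs ?S t \<subseteq> {..t}" by (auto simp: Vs_def)
    then show ?thesis using finite_subset by blast
  qed
  have pV: "p \<in> Vs ?S t" using p Es[OF p] by (auto simp: Vs_def)
  have le: "x \<le> p" if x: "x \<in> Vs ?S t" for x
  proof (rule ccontr)
    assume "\<not> x \<le> p"
    then have xp: "p < x" by simp
    obtain y where y: "(x,y) \<in> ?S" "x \<le> t" "t < y" using x by (auto simp: Vs_def)
    have "y \<noteq> Suc t" using inj[OF p] y xp by auto
    then have "Suc t < y" using y by simp
    then show False using nc p y xp unfolding noncrossing_def by (meson le_imp_less_Suc)
  qed
  have "Max (Vs ?S t) = p" using fin pV le by (intro Max_eqI) auto
  then show ?thesis using kth_largest_1[OF fin] pV by auto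
qed

lemma selp_l: assumes P: "P \<in> NN n" and t: "t < n" and p: "(p, Suc t) \<in> part_edges P"
  shows "kth_smallest (Vs (part_edges P) t) 1 = p"
proof -
  let ?S = "part_edges P"
  have Pp: "partition_on {1..n} P" and nc: "nonnesting P" using P by (auto simp: NN_def)
  have cg: "chain_graph n ?S" by (rule pe_cg[OF Pp])
  have Es: "\<And>x y. (x,y) \<in> ?S \<Longrightarrow> 1 \<le> x \<and> x < y \<and> y \<le> n"
    and inj: "\<And>x x' y. (x,y)\<in>?S \<Longrightarrow> (x',y)\<in>?S \<Longrightarrow> x = x'" using cg unfolding chain_graph_def by blast+
  have fin: "finite (Vs ?S t)"
  proof -
    have "Vs ?S t \<subseteq> {..t}" by (auto simp: Vs_def)
    then show ?thesis using finite_subset by blast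
  qed
  have pV: "p \<in> Vs ?S t" using p Es[OF p] by (auto simp: Vs_def)
  have le: "p \<le> x" if x: "x \<in> Vs ?S t" for x
  proof (rule ccontr)
    assume "\<not> p \<le> x"
    then have xp: "x < p" by simp
    obtain y where y: "(x,y) \<in> ?S" "x \<le> t" "t < y" using x by (auto simp: Vs_def)
    have "y \<noteq> Suc t" using inj[OF p] y xp by auto
    then have "Suc t < y" using y by simp
    moreover have "p < Suc t" using Es[OF p] by simp
    ultimately show False using nc p y xp unfolding nonnesting_def by blast
  qed
  have "Min (Vs ?S t) = p" using fin pV le by (intro Min_eqI) auto
  then show ?thesis using kth_smallest_1[OF fin] pV by auto
qed

theorem corollary3p3:
  fixes n :: nat
  assumes "n \<ge> 1"
  shows "bij_betw (\<lambda>w. phi_r w (replicate n 1)) (Mrb n) (NC n)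
       \<and> bij_betw (\<lambda>w. phi_l w (replicate n 1)) (Mrb n) (NN n)"
proof
  show "bij_betw (\<lambda>w. phi_r w (replicate n 1)) (Mrb n) (NC n)"
  proof (rule bij_betw_imageI)
    show "inj_on (\<lambda>w. phi_r w (replicate n 1)) (Mrb n)"
    proof (rule inj_onI)
      fix w1 w2 assume w1: "w1 \<in> Mrb n" and w2: "w2 \<in> Mrb n"
        and eq: "phi_r w1 (replicate n 1) = phi_r w2 (replicate n 1)"
      have l1: "length w1 = n" using w1 by (simp add: Mrb_def)
      have l2: "length w2 = n" using w2 by (simp add: Mrb_def)
      have "components n (snd (st kth_largest w1 n)) = components n (snd (st kth_largest w2 n))"
        using eq by (simp only: phi_r_def l1 l2 phi_edges_st[OF l1] phi_edges_st[OF l2])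
      then show "w1 = w2" using inj_gen[of kth_largest, OF selok_r w1 w2] by simp
    qed
  next
    show "(\<lambda>w. phi_r w (replicate n 1)) ` Mrb n = NC n"
    proof
      show "(\<lambda>w. phi_r w (replicate n 1)) ` Mrb n \<subseteq> NC n" using r_image by blast
    next
      show "NC n \<subseteq> (\<lambda>w. phi_r w (replicate n 1)) ` Mrb n"
      proof
        fix P assume P: "P \<in> NC n"
        then have Pp: "partition_on {1..n} P" by (simp add: NC_def)
        have s: "word n (part_edges P) \<in> Mrb n \<and>
            components n (snd (st kth_largest (word n (part_edges P)) n)) = P"
          using surj_gen[of kth_largest, OF selok_r Pp selp_r[OF P]] by blast
        have "phi_r (word n (part_edges P)) (replicate n 1) = P"
          using s by (simp only: phi_r_def word_len phi_edges_st[OF word_len])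
        then show "P \<in> (\<lambda>w. phi_r w (replicate n 1)) ` Mrb n" using s by force
      qed
    qed
  qed
next
  show "bij_betw (\<lambda>w. phi_l w (replicate n 1)) (Mrb n) (NN n)"
  proof (rule bij_betw_imageI)
    show "inj_on (\<lambda>w. phi_l w (replicate n 1)) (Mrb n)"
    proof (rule inj_onI)
      fix w1 w2 assume w1: "w1 \<in> Mrb n" and w2: "w2 \<in> Mrb n"
        and eq: "phi_l w1 (replicate n 1) = phi_l w2 (replicate n 1)"
      have l1: "length w1 = n" using w1 by (simp add: Mrb_def)
      have l2: "length w2 = n" using w2 by (simp add: Mrb_def)
      have "components n (snd (st kth_smallest w1 n)) = components n (snd (st kth_smallest w2 n))"
        using eq by (simp only: phi_l_def l1 l2 phi_edges_st[OF l1] phi_edges_st[OF l2])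
      then show "w1 = w2" using inj_gen[of kth_smallest, OF selok_l w1 w2] by simp
    qed
  next
    show "(\<lambda>w. phi_l w (replicate n 1)) ` Mrb n = NN n"
    proof
      show "(\<lambda>w. phi_l w (replicate n 1)) ` Mrb n \<subseteq> NN n" using l_image by blast
    next
      show "NN n \<subseteq> (\<lambda>w. phi_l w (replicate n 1)) ` Mrb n"
      proof
        fix P assume P: "P \<in> NN n"
        then have Pp: "partition_on {1..n} P" by (simp add: NN_def)
        have s: "word n (part_edges P) \<in> Mrb n \<and>
            components n (snd (st kth_smallest (word n (part_edges P)) n)) = P"
          using surj_gen[of kth_smallest, OF selok_l Pp selp_l[OF P]] by blast
        have "phi_l (word n (part_edges P)) (replicate n 1) = P"
          using s by (simp only: phi_l_def word_len phi_edges_st[OF word_len])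
        then show "P \<in> (\<lambda>w. phi_l w (replicate n 1)) ` Mrb n" using s by force
      qed
    qed
  qed
qed

end
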